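(* As formal power series in $q$ whose coefficients are polynomials in $z$ (equivalently, as an identity of analytic functions for $|q|<1$ and $|z|$ sufficiently small), \[ \sum_{n=1}^{\infty} \frac{q^n}{(zq^n;q)_{n+1}\,(zq^{2n+2};q^2)_{\infty}} =\sum_{n=0}^{\infty} \frac{z^nq^{2n^2+2n+1}}{(q;q^2)_{n+1}\,(zq;q^2)_{n+1}}, \] and \[ \sum_{n=0}^{\infty} q^n\,(-zq^{n+1};q)_{n}\,(-zq^{2n+2};q^2)_{\infty} =\sum_{n=0}^{\infty} \frac{z^n q^{n^2+n}}{(q;q^2)_{n+1}}. \]
   Context: For $a$ and $q$, $(a;q)_0:=1$, $(a;q)_n:=(1-a)(1-aq)\cdots(1-aq^{n-1})$ for $n\ge1$, and $(a;q)_\infty:=\lim_{n\to\infty}(a;q)_n$ for $|q|<1$. *)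

theory Defs
  imports "HOL-Analysis.Analysis"
begin

definition qpoch :: "complex \<Rightarrow> complex \<Rightarrow> nat \<Rightarrow> complex" where
  "qpoch a q n = (\<Prod>k<n. (1 - a * q ^ k))"

definition qpoch_inf :: "complex \<Rightarrow> complex \<Rightarrow> complex" where
  "qpoch_inf a q = lim (\<lambda>n. qpoch a q n)"

end

theory Submission
  imports Defs
begin

lemma qpoch_0[simp]: "qpoch a Q 0 = 1" by (simp add: qpoch_def)
lemma qpoch_Suc: "qpoch a Q (Suc n) = qpoch a Q n * (1 - a*Q^n)"
  by (simp add: qpoch_def)
lemma qpoch_Suc': "qpoch a Q (Suc n) = (1 - a) * qpoch (a*Q) Q n"
  unfolding qpoch_def by (subst prod.lessThan_Suc_shift) (simp add: mult.assoc)

lemma qpoch_conv: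
  fixes a Q :: complex
  assumes "norm Q < 1"
  shows "convergent_prod (\<lambda>k. 1 - a*Q^k)"
proof -
  have "summable (\<lambda>k. norm a * norm Q ^ k)"
    using assms by (intro summable_mult summable_geometric) auto
  moreover have "(\<lambda>k. norm ((1 - a*Q^k) - 1)) = (\<lambda>k. norm a * norm Q ^ k)"
    by (simp add: norm_mult norm_power)
  ultimately have "summable (\<lambda>k. norm ((1 - a*Q^k) - 1))" by simp
  thus ?thesis by (intro abs_convergent_prod_imp_convergent_prod summable_imp_abs_convergent_prod)
qed

lemma qpoch_LIMSEQ:
  assumes "norm Q < 1"
  shows "qpoch a Q \<longlonglongrightarrow> qpoch_inf a Q"
proof -
  have "(\<lambda>n. \<Prod>i\<le>n. 1 - a*Q^i) \<longlonglongrightarrow> prodinf (\<lambda>k. 1 - a*Q^k)"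
    by (rule convergent_prod_LIMSEQ[OF qpoch_conv[OF assms]])
  hence *: "qpoch a Q \<longlonglongrightarrow> prodinf (\<lambda>k. 1 - a*Q^k)"
    unfolding qpoch_def by (simp add: LIMSEQ_lessThan_iff_atMost)
  hence "qpoch_inf a Q = prodinf (\<lambda>k. 1 - a*Q^k)"
    unfolding qpoch_inf_def by (rule limI)
  with * show ?thesis by simp
qed

lemma qpoch_inf_shift:
  assumes "norm Q < 1"
  shows "qpoch_inf a Q = (1 - a) * qpoch_inf (a*Q) Q"
proof -
  have "(\<lambda>n. qpoch a Q (Suc n)) \<longlonglongrightarrow> qpoch_inf a Q"
    using qpoch_LIMSEQ[OF assms] by (rule LIMSEQ_Suc)
  moreover have "(\<lambda>n. qpoch a Q (Suc n)) \<longlonglongrightarrow> (1 - a) * qpoch_inf (a*Q) Q"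
    unfolding qpoch_Suc' by (intro tendsto_mult tendsto_const qpoch_LIMSEQ assms)
  ultimately show ?thesis by (rule LIMSEQ_unique)
qed

lemma qpoch_nz: "(\<And>k. a*Q^k \<noteq> 1) \<Longrightarrow> qpoch a Q n \<noteq> 0"
  unfolding qpoch_def by (auto simp: prod_zero_iff)

lemma qpoch_inf_nz:
  assumes "norm Q < 1" "\<And>k. a*Q^k \<noteq> 1"
  shows "qpoch_inf a Q \<noteq> 0"
proof -
  have "qpoch_inf a Q = prodinf (\<lambda>k. 1 - a*Q^k)"
  proof -
    have A: "(\<lambda>n. \<Prod>k\<le>n. 1 - a * Q ^ k) \<longlonglongrightarrow> qpoch_inf a Q"
      using qpoch_LIMSEQ[OF assms(1), of a] unfolding qpoch_def by (simp add: LIMSEQ_lessThan_iff_atMost)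
    show ?thesis using LIMSEQ_unique[OF A convergent_prod_LIMSEQ[OF qpoch_conv[OF assms(1)]]] .
  qed
  also have "\<dots> \<noteq> 0" using assms by (intro prodinf_nonzero qpoch_conv) auto
  finally show ?thesis .
qed

lemma qpoch_bound:
  assumes "norm Q < 1"
  shows "norm (qpoch a Q n - 1) \<le> exp (norm a / (1 - norm Q)) - 1"
proof -
  have "norm (qpoch a Q n - 1) = norm ((\<Prod>k<n. 1 + (- (a*Q^k))) - 1)"
    unfolding qpoch_def by simp
  also have "\<dots> \<le> (\<Prod>k<n. 1 + norm (- (a*Q^k))) - 1"
    by (rule norm_prod_minus1_le_prod_minus1)
  also have "(\<Prod>k<n. 1 + norm (- (a*Q^k))) \<le> (\<Prod>k<n. exp (norm a * norm Q ^ k))"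
    by (intro prod_mono) (auto simp: norm_mult norm_power add_nonneg_nonneg)
  also have "\<dots> = exp (\<Sum>k<n. norm a * norm Q ^ k)" by (simp add: exp_sum)
  also have "(\<Sum>k<n. norm a * norm Q ^ k) \<le> norm a / (1 - norm Q)"
  proof -
    have "(\<lambda>k. norm a * norm Q ^ k) sums (norm a * (1 / (1 - norm Q)))"
      using assms by (intro sums_mult geometric_sums) auto
    hence "(\<Sum>k<n. norm a * norm Q ^ k) \<le> (\<Sum>k. norm a * norm Q ^ k)"
      by (intro sum_le_suminf) (auto simp: sums_iff)
    also have "\<dots> = norm a * (1 / (1 - norm Q))" using \<open>_ sums _\<close> by (simp add: sums_iff)
    finally have "(\<Sum>k<n. norm a * norm Q ^ k) \<le> norm a * (1 / (1 - norm Q))" .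
    thus ?thesis by simp
  qed
  finally show ?thesis by simp
qed

lemma qpoch_inf_bound:
  assumes "norm Q < 1"
  shows "norm (qpoch_inf a Q - 1) \<le> exp (norm a / (1 - norm Q)) - 1"
proof (rule LIMSEQ_le_const2)
  show "(\<lambda>n. norm (qpoch a Q n - 1)) \<longlonglongrightarrow> norm (qpoch_inf a Q - 1)"
    by (intro tendsto_intros qpoch_LIMSEQ assms)
qed (use qpoch_bound[OF assms] in auto)

lemma qpoch_norm_le:
  assumes "norm Q < 1"
  shows "norm (qpoch a Q n) \<le> exp (norm a / (1 - norm Q))"
  using qpoch_bound[OF assms, of a n] norm_triangle_ineq2[of "qpoch a Q n" 1] by simp

lemma qpoch_inf_norm_le:
  assumes "norm Q < 1"
  shows "norm (qpoch_inf a Q) \<le> exp (norm a / (1 - norm Q))"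
  using qpoch_inf_bound[OF assms, of a] norm_triangle_ineq2[of "qpoch_inf a Q" 1] by simp

lemma exp_quarter: "exp (1/4::real) \<le> 3/2"
  using exp_bound[of "1/4"] by (simp add: power2_eq_square)

lemma lower_aux:
  assumes "norm (x - 1) \<le> exp t - 1" "t \<le> 1/4"
  shows "1/2 \<le> norm (x::complex)"
proof -
  have "exp t \<le> 3/2" using exp_quarter assms(2) by (meson exp_le_cancel_iff order_trans)
  moreover have "1 - norm (x - 1) \<le> norm x"
    using norm_triangle_ineq2[of 1 "1 - x"] by (simp add: norm_minus_commute)
  ultimately show ?thesis using assms(1) by linarith
qed

lemma qpoch_lower:
  assumes "norm Q < 1" "norm a \<le> (1 - norm Q)/4"
  shows "1/2 \<le> norm (qpoch a Q n)" "1/2 \<le> norm (qpoch_inf a Q)"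
proof -
  have "norm a / (1 - norm Q) \<le> 1/4" using assms by (simp add: field_simps)
  thus "1/2 \<le> norm (qpoch a Q n)" "1/2 \<le> norm (qpoch_inf a Q)"
    using lower_aux qpoch_bound[OF assms(1)] qpoch_inf_bound[OF assms(1)] by blast+
qed

lemma qpoch_to1:
  assumes "norm Q < 1" "a \<longlonglongrightarrow> 0"
  shows "(\<lambda>n. qpoch (a n) Q (m n)) \<longlonglongrightarrow> 1" "(\<lambda>n. qpoch_inf (a n) Q) \<longlonglongrightarrow> 1"
proof -
  have t: "(\<lambda>n. exp (norm (a n) / (1 - norm Q)) - 1) \<longlonglongrightarrow> 0"
    using assms by (auto intro!: tendsto_eq_intros)
  show "(\<lambda>n. qpoch (a n) Q (m n)) \<longlonglongrightarrow> 1"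
    by (rule LIM_zero_cancel, rule Lim_null_comparison[OF _ t])
       (use qpoch_bound[OF assms(1)] in auto)
  show "(\<lambda>n. qpoch_inf (a n) Q) \<longlonglongrightarrow> 1"
    by (rule LIM_zero_cancel, rule Lim_null_comparison[OF _ t])
       (use qpoch_inf_bound[OF assms(1)] in auto)
qed


lemma ratio_summable:
  fixes f r :: "nat \<Rightarrow> complex"
  assumes "\<And>n. f (Suc n) = r n * f n" "r \<longlonglongrightarrow> 0"
  shows "summable (\<lambda>n. norm (f n))"
proof -
  have "(\<lambda>n. norm (r n)) \<longlonglongrightarrow> 0" using assms(2) by (simp add: tendsto_norm_zero)
  hence "eventually (\<lambda>n. norm (r n) < 1/2) sequentially" by (rule order_tendstoD) simp
  then obtain N where N: "\<And>n. n \<ge> N \<Longrightarrow> norm (r n) < 1/2" by (auto simp: eventually_at_top_linorder)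
  show ?thesis
  proof (rule summable_ratio_test[of "1/2" N])
    fix n assume "n \<ge> N"
    hence "norm (r n) * norm (f n) \<le> 1/2 * norm (f n)" using N[of n] by (intro mult_right_mono) auto
    thus "norm (norm (f (Suc n))) \<le> 1/2 * norm (norm (f n))" by (simp add: assms(1) norm_mult)
  qed simp
qed

lemma uniq:
  fixes G \<gamma> :: "nat \<Rightarrow> complex"
  assumes e: "\<And>N. G N = \<gamma> N * G (Suc N)" and g: "\<And>N. N \<ge> N0 \<Longrightarrow> norm (\<gamma> N) \<le> c"
    and c: "c < 1" and b: "\<And>N. N \<ge> N0 \<Longrightarrow> norm (G N) \<le> B"
  shows "G 0 = 0"
proof -
  have c0: "0 \<le> c" using g[of N0] norm_ge_zero[of "\<gamma> N0"] by linarith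
  have k: "\<forall>N\<ge>N0. norm (G N) \<le> c^k * B" for k
  proof (induction k)
    case 0 thus ?case using b by simp
  next
    case (Suc k)
    show ?case
    proof (intro allI impI)
      fix N assume N: "N \<ge> N0"
      have "norm (G N) = norm (\<gamma> N) * norm (G (Suc N))" by (subst e) (simp add: norm_mult)
      also have "\<dots> \<le> c * (c^k * B)"
        using Suc N g[OF N] c0 by (intro mult_mono) auto
      finally show "norm (G N) \<le> c ^ Suc k * B" by simp
    qed
  qed
  have z: "G N = 0" if N: "N \<ge> N0" for N
  proof -
    have "(\<lambda>k. c^k * B) \<longlonglongrightarrow> 0"
      using c c0 by (intro tendsto_mult_left_zero LIMSEQ_power_zero) auto
    hence "norm (G N) \<le> 0" by (rule LIMSEQ_le_const) (use k N in auto)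
    thus ?thesis by simp
  qed
  show "G 0 = 0"
  proof (rule inc_induct[of 0 N0])
    show "G N0 = 0" using z by simp
  next
    fix n assume "n < N0" "G (Suc n) = 0"
    thus "G n = 0" using e[of n] by simp
  qed simp
qed


lemma pw: "a + b = c \<Longrightarrow> (x::complex)^a * x^b = x^c" by (metis power_add)
lemma pq3: "((q::complex)^2)^m = q^(2*m)" by (rule power_mult[symmetric])
lemma pq1: "(q::complex)*(q^2)^m = q^(2*m+1)" unfolding pq3 by (metis power_Suc Suc_eq_plus1)
lemma pq2: "((q::complex)^2)^m * q^2 = q^(2*m+2)" unfolding pq3 by (metis power_add)

lemma ne1: "norm (a::complex) < 1 \<Longrightarrow> norm Q \<le> 1 \<Longrightarrow> a*Q^k \<noteq> 1"
proof
  assume "norm a < 1" "norm Q \<le> 1" "a*Q^k = 1"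
  have "norm (a*Q^k) \<le> norm a * 1" unfolding norm_mult norm_power
    using \<open>norm Q \<le> 1\<close> by (intro mult_left_mono power_le_one) auto
  with \<open>a*Q^k = 1\<close> \<open>norm a < 1\<close> show False by simp
qed

definition C2 :: "complex \<Rightarrow> complex \<Rightarrow> nat \<Rightarrow> complex" where
  "C2 q z n = z ^ n * q ^ (n ^ 2 + n) / qpoch q (q ^ 2) (n + 1)"

context fixes q :: complex assumes q: "norm q < 1"
begin

lemma q2: "norm (q^2) \<le> norm q" "norm (q^2) < 1"
proof -
  have "norm q ^ 2 \<le> norm q ^ 1" using q by (intro power_decreasing) auto
  thus "norm (q^2) \<le> norm q" by (simp add: norm_power)
  thus "norm (q^2) < 1" using q by simp
qed

lemma zq_ne1: "norm z \<le> 1 \<Longrightarrow> 0 < k \<Longrightarrow> z * q^k \<noteq> 1"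
proof
  assume z: "norm z \<le> 1" and k: "0 < k" and e: "z*q^k = 1"
  have "norm q ^ k \<le> norm q ^ 1" using q k by (intro power_decreasing) auto
  hence "norm z * norm q ^ k \<le> 1 * norm q"
    using z by (intro mult_mono) auto
  hence "norm (z*q^k) < 1" using q by (simp add: norm_mult norm_power)
  with e show False by simp
qed

lemma q_ne1: "0 < k \<Longrightarrow> q^k \<noteq> 1"
  using zq_ne1[of 1 k] by simp

lemma pq_nz: "qpoch q (q^2) n \<noteq> 0"
  using q q2 by (intro qpoch_nz ne1) auto

lemma C2_Suc: "C2 q z (Suc n) = (z * q^(2*n+2) / (1 - q^(2*n+3))) * C2 q z n"
proof -
  have e1: "qpoch q (q^2) (Suc n + 1) = qpoch q (q^2) (n+1) * (1 - q^(2*n+3))"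
  proof -
    have "qpoch q (q^2) (Suc n + 1) = qpoch q (q^2) (n+1) * (1 - q*(q^2)^(n+1))"
      using qpoch_Suc[of q "q^2" "n+1"] by simp
    also have "q*(q^2)^(n+1) = q^(2*n+3)" unfolding pq1 by (rule arg_cong[where f="power q"]) simp
    finally show ?thesis .
  qed
  have e2: "q ^ (Suc n ^ 2 + Suc n) = q^(2*n+2) * q^(n^2+n)"
    by (rule pw[symmetric]) (simp add: power2_eq_square)
  have "1 - q^(2*n+3) \<noteq> 0" using q_ne1[of "2*n+3"] by auto
  thus ?thesis unfolding C2_def e1 e2 using pq_nz[of "n+1"] by (simp add: field_simps)
qed

lemma C2_summable: "summable (\<lambda>n. norm (C2 q z n))"
proof (rule ratio_summable[of "C2 q z" "\<lambda>n. z * q^(2*n+2) / (1 - q^(2*n+3))", OF C2_Suc])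
  have "(\<lambda>n. z * (q^2 * (q^2)^n) / (1 - q^3 * (q^2)^n)) \<longlonglongrightarrow> z * (q^2 * 0) / (1 - q^3 * 0)"
    using q2 by (intro tendsto_intros) auto
  moreover have "\<And>n. q^(2*n+2) = q^2 * (q^2)^n" "\<And>n. q^(2*n+3) = q^3*(q^2)^n"
    unfolding pq3 by (rule pw[symmetric], simp)+
  ultimately show "(\<lambda>n. z * q^(2*n+2) / (1 - q^(2*n+3))) \<longlonglongrightarrow> 0" by simp
qed

lemma C2_scale: "C2 q (z*q^2) n = (q^2)^n * C2 q z n"
  by (simp add: C2_def power_mult_distrib)

lemma R2_fe: "suminf (C2 q z) = 1 + (q + z*q^2) * suminf (C2 q (z*q^2))"
proof -
  define h where "h n = C2 q z n - q * C2 q (z*q^2) n" for n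
  have s1: "summable (C2 q z)" "summable (C2 q (z*q^2))"
    using C2_summable summable_norm_cancel by blast+
  have "h sums (suminf (C2 q z) - q * suminf (C2 q (z*q^2)))"
    unfolding h_def using s1 by (intro sums_diff sums_mult summable_sums)
  hence A: "(\<lambda>n. h (Suc n)) sums (suminf (C2 q z) - q * suminf (C2 q (z*q^2)) - h 0)"
    by (simp add: sums_Suc_iff)
  have h0: "h 0 = 1"
  proof -
    have "1 - q \<noteq> 0" using q by auto
    thus ?thesis by (simp add: h_def C2_def qpoch_def field_simps)
  qed
  have hS: "h (Suc n) = z*q^2 * C2 q (z*q^2) n" for n
  proof -
    have "1 - q^(2*n+3) \<noteq> 0" using q_ne1[of "2*n+3"] by auto
    have e: "q * (q^2)^(Suc n) = q^(2*n+3)" "(q^2)^n * q^2 = q^(2*n+2)"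
    proof -
      show "(q^2)^n * q^2 = q^(2*n+2)" by (rule pq2)
      have "q * (q^2)^(Suc n) = q^(2*Suc n+1)" by (rule pq1)
      also have "\<dots> = q^(2*n+3)" by (rule arg_cong[where f="power q"]) simp
      finally show "q * (q^2)^(Suc n) = q^(2*n+3)" .
    qed
    have "h (Suc n) = C2 q z (Suc n) * (1 - q^(2*n+3))"
      unfolding h_def C2_scale e(1)[symmetric] by (simp add: algebra_simps)
    also have "\<dots> = z * q^(2*n+2) * C2 q z n"
      unfolding C2_Suc using \<open>1 - q^(2*n+3) \<noteq> 0\<close> by simp
    also have "\<dots> = z*q^2 * C2 q (z*q^2) n"
      unfolding C2_scale e(2)[symmetric] by (simp add: algebra_simps)
    finally show ?thesis .
  qed
  have "(\<lambda>n. h (Suc n)) sums (z*q^2 * suminf (C2 q (z*q^2)))"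
    unfolding hS using s1 by (intro sums_mult summable_sums)
  from sums_unique2[OF A this] h0 show ?thesis by (simp add: algebra_simps)
qed

lemma R2_bound: "norm w \<le> 1 \<Longrightarrow> norm (suminf (C2 q w)) \<le> (\<Sum>n. norm (C2 q 1 n))"
proof (rule norm_suminf_le)
  fix n assume "norm w \<le> 1"
  hence "norm w ^ n \<le> 1" by (simp add: power_le_one)
  hence "norm w ^ n * (norm q ^ (n^2+n) / norm (qpoch q (q^2) (n+1))) \<le> norm q ^ (n^2+n) / norm (qpoch q (q^2) (n+1))"
    by (intro mult_left_le_one_le) auto
  thus "norm (C2 q w n) \<le> norm (C2 q 1 n)"
    by (simp add: C2_def norm_mult norm_divide norm_power)
qed (rule C2_summable)

end


lemmas pn = power_add power2_eq_square mult_2 mult_2_right power3_eq_cube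

lemma ma: "a + b = c \<Longrightarrow> (y::complex) * x^a * x^b = y * x^c"
  by (metis power_add mult.assoc)

definition A2 :: "complex \<Rightarrow> complex \<Rightarrow> nat \<Rightarrow> complex" where
  "A2 q z n = q ^ n * qpoch (- z * q ^ (n + 1)) q n * qpoch_inf (- z * q ^ (2 * n + 2)) (q ^ 2)"

definition b2 :: "complex \<Rightarrow> complex \<Rightarrow> nat \<Rightarrow> complex" where
  "b2 q w m = qpoch (- w * q ^ (m + 1)) q m * qpoch_inf (- w * q ^ (2 * m + 2)) (q ^ 2)"

context fixes q :: complex assumes q: "norm q < 1"
begin

lemma exp_le_aux:
  assumes "norm (a::complex) \<le> 1" "norm Q \<le> norm q"
  shows "exp (norm a / (1 - norm Q)) \<le> exp (1 / (1 - norm q))"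
  using assms q by (intro exp_mono frac_le) auto

lemma zqk_le: "norm z \<le> 1 \<Longrightarrow> norm (z * q^k) \<le> 1" "norm z \<le> 1 \<Longrightarrow> norm (- z * q^k) \<le> 1"
proof -
  assume z: "norm z \<le> 1"
  have "norm q ^ k \<le> 1" using q by (simp add: power_le_one)
  hence "norm z * norm q ^ k \<le> 1 * 1" using z by (intro mult_mono) auto
  thus "norm (z * q^k) \<le> 1" "norm (- z * q^k) \<le> 1" by (simp_all add: norm_mult norm_power)
qed

lemma A2_bound:
  assumes z: "norm z \<le> 1"
  shows "norm (A2 q z n) \<le> norm q ^ n * (exp (1 / (1 - norm q)))^2"
proof -
  have a: "norm (- z * q ^ (n + 1)) \<le> 1" "norm (- z * q ^ (2 * n + 2)) \<le> 1"
    by (rule zqk_le[OF z])+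
  have p1: "norm (qpoch (- z * q ^ (n + 1)) q n) \<le> exp (1 / (1 - norm q))"
    by (rule order_trans[OF qpoch_norm_le[OF q] exp_le_aux[OF a(1) order_refl]])
  have p2: "norm (qpoch_inf (- z * q ^ (2 * n + 2)) (q^2)) \<le> exp (1 / (1 - norm q))"
    by (rule order_trans[OF qpoch_inf_norm_le[OF q2(2)[OF q]] exp_le_aux[OF a(2) q2(1)[OF q]]])
  have "norm q ^ n * norm (qpoch (- z * q ^ (n + 1)) q n) \<le> norm q ^ n * exp (1 / (1 - norm q))"
    by (intro mult_left_mono p1) auto
  hence "norm q ^ n * norm (qpoch (- z * q ^ (n + 1)) q n) * norm (qpoch_inf (- z * q ^ (2 * n + 2)) (q^2))
     \<le> norm q ^ n * exp (1 / (1 - norm q)) * exp (1 / (1 - norm q))"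
    by (rule mult_mono[OF _ p2]) auto
  thus ?thesis unfolding A2_def norm_mult norm_power by (simp add: power2_eq_square mult.assoc)
qed

lemma A2_summable: "norm z \<le> 1 \<Longrightarrow> summable (\<lambda>n. norm (A2 q z n))"
  by (rule summable_comparison_test[OF _ summable_mult2[OF summable_geometric]])
     (use A2_bound q in auto)

lemma L2_bound: "norm z \<le> 1 \<Longrightarrow> norm (suminf (A2 q z)) \<le> (\<Sum>n. norm q ^ n * (exp (1 / (1 - norm q)))^2)"
  by (rule norm_suminf_le[OF A2_bound summable_mult2[OF summable_geometric]]) (use q in auto)

lemma A2_Suc: "A2 q z (n+1) = q * (1 + z*q^(n+2)) * A2 q (z*q^2) n"
proof -
  have eq: "- z * q ^ (n + 1 + 1) * q = - (z*q^2) * q^(n+1)"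
    by (simp add: pn algebra_simps)
  have e1: "qpoch (- z * q ^ (n + 1 + 1)) q (n+1) = (1 - - z * q ^ (n + 1 + 1)) * qpoch (- (z*q^2) * q^(n+1)) q n"
    using qpoch_Suc'[of "- z * q ^ (n + 1 + 1)" q n, unfolded eq] by simp
  have e2: "- z * q ^ (2 * (n+1) + 2) = - (z * q^2) * q^(2*n+2)"
    by (simp add: pn algebra_simps)
  have e3: "q^(n+1) = q * q^n" by simp
  show ?thesis unfolding A2_def e1 e2 e3 by (simp add: algebra_simps)
qed

lemma A2_b2: "A2 q w m = q^m * b2 q w m"
  by (simp add: A2_def b2_def mult.assoc)

lemma b2_rel: "b2 q w m * (1 + w*q^(2*m+1)) = (1 + w*q^(m+1)) * b2 q w (m+1)"
proof -
  define P where "P = qpoch (- w * q ^ (m + 1)) q"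
  have f1: "(- w * q ^ (m + 1)) * q^m = - (w*q^(2*m+1))"
    using ma[of "m+1" m "2*m+1" "-w" q] by simp
  have f2: "(- w * q ^ (m + 1)) * q^(m+1) = - (w*q^(2*m+2))"
    using ma[of "m+1" "m+1" "2*m+2" "-w" q] by simp
  have i: "P (m+2) = P m * (1 + w*q^(2*m+1)) * (1 + w*q^(2*m+2))"
    using qpoch_Suc[of "- w * q ^ (m + 1)" q m] qpoch_Suc[of "- w * q ^ (m + 1)" q "m+1"]
    unfolding P_def f1 f2 by (simp add: numeral_2_eq_2)
  have f3: "(- w * q ^ (m + 1)) * q = - w * q^(m+1+1)"
    using ma[of "m+1" 1 "m+1+1" "-w" q] by simp
  have ii: "P (m+2) = (1 + w*q^(m+1)) * qpoch (- w * q ^ (m + 1 + 1)) q (m+1)"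
    using qpoch_Suc'[of "- w * q ^ (m + 1)" q "m+1"] unfolding P_def f3 by (simp add: numeral_2_eq_2)
  have f4: "(- w * q ^ (2*m + 2)) * q^2 = - w * q^(2*(m+1)+2)"
    using ma[of "2*m+2" 2 "2*(m+1)+2" "-w" q] by simp
  have iii: "qpoch_inf (- w * q ^ (2*m + 2)) (q^2) = (1 + w*q^(2*m+2)) * qpoch_inf (- w * q^(2*(m+1)+2)) (q^2)"
    using qpoch_inf_shift[OF q2(2)[OF q], of "- w * q ^ (2*m + 2)"] unfolding f4 by simp
  have "b2 q w m * (1 + w*q^(2*m+1)) = P m * (1 + w*q^(2*m+1)) * (1 + w*q^(2*m+2)) * qpoch_inf (- w * q^(2*(m+1)+2)) (q^2)"
    unfolding b2_def P_def[symmetric] iii by (simp add: algebra_simps)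
  also have "\<dots> = (1 + w*q^(m+1)) * b2 q w (m+1)"
    unfolding i[symmetric] ii b2_def by (simp add: pn algebra_simps)
  finally show ?thesis .
qed

lemma tele2:
  shows "(\<lambda>n. w*(1 - q^(n+1)) * A2 q w n) sums (qpoch_inf (- w) (q^2) - 1)"
proof -
  define s where "s m = (1 + w*q^m) * b2 q w m" for m
  have t: "w*(1 - q^(n+1)) * A2 q w n = s n - s (Suc n)" for n
  proof -
    have "s (Suc n) = b2 q w n * (1 + w*q^(2*n+1))" unfolding s_def using b2_rel[of w n] by simp
    moreover have "q^(n+1) * q^n = q^(2*n+1)" by (rule pw) simp
    ultimately show ?thesis unfolding s_def A2_b2 by (simp add: pn algebra_simps)
  qed
  have "s \<longlonglongrightarrow> (1 + w*0) * (1*1)"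
  proof -
    have l1: "(\<lambda>m. - w * q ^ (m + 1)) \<longlonglongrightarrow> 0"
    proof -
      have "(\<lambda>m. - w * (q * q ^ m)) \<longlonglongrightarrow> - w * (q * 0)" by (intro tendsto_intros q)
      thus ?thesis by simp
    qed
    have l2: "(\<lambda>m. - w * q ^ (2*m + 2)) \<longlonglongrightarrow> 0"
    proof -
      have "(\<lambda>m. - w * (q^2 * (q^2) ^ m)) \<longlonglongrightarrow> - w * (q^2 * 0)" by (intro tendsto_intros q2[OF q])
      moreover have "q^2 * (q^2)^m = q^(2*m+2)" for m unfolding pq3 by (rule pw) simp
      ultimately show ?thesis by simp
    qed
    show ?thesis unfolding s_def b2_def
      by (intro tendsto_intros q qpoch_to1[OF q l1] qpoch_to1[OF q2(2)[OF q] l2])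
  qed
  hence "s \<longlonglongrightarrow> 1" by simp
  hence "(\<lambda>n. s n - s (Suc n)) sums (s 0 - 1)" by (rule telescope_sums')
  moreover have "s 0 = qpoch_inf (- w) (q^2)"
    unfolding s_def b2_def using qpoch_inf_shift[OF q2(2)[OF q], of "-w"] by (simp add: power2_eq_square)
  ultimately show ?thesis unfolding t by simp
qed

lemma L2_fe:
  assumes z: "norm z \<le> 1"
  shows "suminf (A2 q z) = 1 + (q + z*q^2) * suminf (A2 q (z*q^2))"
proof -
  define w where "w = z*q^2"
  have w: "norm w \<le> 1" unfolding w_def by (rule zqk_le[OF z])
  have sz: "summable (A2 q z)" "summable (A2 q w)"
    using A2_summable[OF z] A2_summable[OF w] summable_norm_cancel by blast+
  have "A2 q z (Suc n) = (q + z*q^2) * A2 q w n - w*(1 - q^(n+1)) * A2 q w n" for n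
  proof -
    have "q * q^(n+2) = q^2 * q^(n+1)"
      using pw[of 1 "n+2" "n+3" q] pw[of 2 "n+1" "n+3" q] by simp
    thus ?thesis using A2_Suc[of z n] unfolding w_def by (simp add: pn algebra_simps)
  qed
  moreover have "(\<lambda>n. (q + z*q^2) * A2 q w n - w*(1 - q^(n+1)) * A2 q w n) sums
      ((q + z*q^2) * suminf (A2 q w) - (qpoch_inf (- w) (q^2) - 1))"
    by (intro sums_diff sums_mult summable_sums sz tele2)
  ultimately have A: "(\<lambda>n. A2 q z (Suc n)) sums ((q + z*q^2) * suminf (A2 q w) - (qpoch_inf (- w) (q^2) - 1))"
    by simp
  have "(\<lambda>n. A2 q z (Suc n)) sums (suminf (A2 q z) - A2 q z 0)"
    using sz(1) by (simp add: sums_Suc_iff summable_sums)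
  moreover have "A2 q z 0 = qpoch_inf (- w) (q^2)" by (simp add: A2_def w_def power2_eq_square)
  ultimately show ?thesis using sums_unique2[OF A] unfolding w_def by (simp add: algebra_simps)
qed

end


lemma zN_facts:
  fixes q z :: complex assumes q: "norm q < 1" and z: "norm z < 1"
  shows "\<And>N. norm (z*(q^2)^N) \<le> norm z"
    and "\<And>e. e > 0 \<Longrightarrow> \<exists>N0. \<forall>N\<ge>N0. norm (z*(q^2)^N) \<le> e"
proof -
  fix N
  have "norm (q^2) ^ N \<le> 1" using q2(2)[OF q] by (simp add: power_le_one)
  thus "norm (z*(q^2)^N) \<le> norm z" by (simp add: norm_mult norm_power mult_left_le)
next
  fix e :: real assume e: "e > 0"
  have "(\<lambda>N. z*(q^2)^N) \<longlonglongrightarrow> z * 0" by (intro tendsto_intros q2(2)[OF q])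
  hence "(\<lambda>N. norm (z*(q^2)^N)) \<longlonglongrightarrow> 0" by (simp add: tendsto_norm_zero)
  hence "eventually (\<lambda>N. norm (z*(q^2)^N) < e) sequentially" using e by (rule order_tendstoD)
  thus "\<exists>N0. \<forall>N\<ge>N0. norm (z*(q^2)^N) \<le> e"
    by (auto simp: eventually_at_top_linorder intro: less_imp_le)
qed

lemma id2:
  fixes q z :: complex assumes q: "norm q < 1" and z: "norm z < 1"
  shows "summable (C2 q z) \<and> A2 q z sums suminf (C2 q z)"
proof -
  define zN where "zN N = z*(q^2)^N" for N
  have zS: "zN (Suc N) = zN N * q^2" for N unfolding zN_def by (simp add: mult.assoc mult.commute)
  have zle: "norm (zN N) \<le> 1" for N using zN_facts(1)[OF q z, of N] z unfolding zN_def by simp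
  define G where "G N = suminf (A2 q (zN N)) - suminf (C2 q (zN N))" for N
  define \<gamma> where "\<gamma> N = q + zN N * q^2" for N
  have e: "G N = \<gamma> N * G (Suc N)" for N
    unfolding G_def \<gamma>_def zS using L2_fe[OF q zle[of N]] R2_fe[OF q, of "zN N"]
    by (simp add: algebra_simps)
  define \<epsilon> where "\<epsilon> = (1 - norm q)/4"
  have ep: "\<epsilon> > 0" using q unfolding \<epsilon>_def by simp
  obtain N0 where N0: "\<And>N. N \<ge> N0 \<Longrightarrow> norm (zN N) \<le> \<epsilon>"
    using zN_facts(2)[OF q z ep] unfolding zN_def by blast
  have g: "norm (\<gamma> N) \<le> norm q + \<epsilon>" if "N \<ge> N0" for N
  proof -
    have "norm (q^2) \<le> 1" using q2(2)[OF q] by simp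
    hence "norm (zN N) * norm (q^2) \<le> \<epsilon> * 1" using N0[OF that] ep by (intro mult_mono) auto
    thus ?thesis unfolding \<gamma>_def using norm_triangle_ineq[of q "zN N * q^2"] by (simp add: norm_mult)
  qed
  have c: "norm q + \<epsilon> < 1" using q unfolding \<epsilon>_def by (simp add: field_simps)
  have b: "norm (G N) \<le> (\<Sum>n. norm q ^ n * (exp (1 / (1 - norm q)))^2) + (\<Sum>n. norm (C2 q 1 n))" for N
    unfolding G_def by (rule order_trans[OF norm_triangle_ineq4 add_mono[OF L2_bound[OF q zle[of N]] R2_bound[OF q zle[of N]]]])
  have "G 0 = 0"
    apply (rule uniq[of G \<gamma> N0 "norm q + \<epsilon>"])
       apply (rule e) apply (erule g) apply (rule c) apply (rule b) done
  hence eq: "suminf (A2 q z) = suminf (C2 q z)" unfolding G_def zN_def by simp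
  have s1: "summable (\<lambda>n. norm (A2 q z n))" by (rule A2_summable[OF q]) (use z in simp)
  have sA: "summable (A2 q z)" by (rule summable_norm_cancel[OF s1])
  have sC: "summable (C2 q z)" by (rule summable_norm_cancel[OF C2_summable[OF q]])
  have "A2 q z sums suminf (A2 q z)" by (rule summable_sums[OF sA])
  with sC eq show ?thesis by simp
qed


definition G1 :: "complex \<Rightarrow> complex \<Rightarrow> complex \<Rightarrow> nat \<Rightarrow> complex" where
  "G1 q z y n = z ^ n * q ^ (2 * n ^ 2 + 2 * n + 1) / (qpoch q (q ^ 2) (n + 1) * qpoch (y * q) (q ^ 2) (n + 1))"

context fixes q :: complex assumes q: "norm q < 1"
begin

lemma zqm_ne1: "norm z \<le> 1 \<Longrightarrow> 0 < m \<Longrightarrow> (z*q^m)*q^j \<noteq> 1" "norm z \<le> 1 \<Longrightarrow> 0 < m \<Longrightarrow> (z*q^m)*(q^2)^j \<noteq> 1"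
proof -
  assume z: "norm z \<le> 1" and m: "0 < m"
  have e: "(z*q^m)*q^j = z*q^(m+j)" by (simp add: power_add mult.assoc)
  show "(z*q^m)*q^j \<noteq> 1" unfolding e using zq_ne1[OF q z, of "m+j"] m by simp
  have e2: "(z*q^m)*(q^2)^j = z*q^(m+2*j)" by (simp add: power_add power_mult mult.assoc)
  show "(z*q^m)*(q^2)^j \<noteq> 1" unfolding e2 using zq_ne1[OF q z, of "m+2*j"] m by simp
qed

lemma yq_nz: "norm y \<le> 1 \<Longrightarrow> qpoch (y*q) (q^2) n \<noteq> 0"
  using zqm_ne1(2)[of y 1] by (intro qpoch_nz) auto

lemma qQ_Suc: "qpoch (y*q) (q^2) (Suc n + 1) = qpoch (y*q) (q^2) (n+1) * (1 - y*q^(2*n+3))"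
proof -
  have "qpoch (y*q) (q^2) (Suc n + 1) = qpoch (y*q) (q^2) (n+1) * (1 - (y*q)*(q^2)^(n+1))"
    using qpoch_Suc[of "y*q" "q^2" "n+1"] by simp
  also have "(y*q)*(q^2)^(n+1) = y * q^(2*n+3)"
    unfolding mult.assoc pq1 by (rule arg_cong[where f="\<lambda>x. y * x"], rule arg_cong[where f="power q"]) simp
  finally show ?thesis .
qed

lemma G1_Suc: "norm y \<le> 1 \<Longrightarrow>
  G1 q z y (Suc n) = (z * q^(4*n+4) / ((1 - q^(2*n+3)) * (1 - y*q^(2*n+3)))) * G1 q z y n"
proof -
  assume y: "norm y \<le> 1"
  have e1: "qpoch q (q^2) (Suc n + 1) = qpoch q (q^2) (n+1) * (1 - q^(2*n+3))"
    using qQ_Suc[of 1 n] by simp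
  have e2: "q ^ (2 * Suc n ^ 2 + 2 * Suc n + 1) = q^(4*n+4) * q^(2 * n ^ 2 + 2 * n + 1)"
    by (rule pw[symmetric]) (simp add: power2_eq_square algebra_simps)
  have "1 - q^(2*n+3) \<noteq> 0" using q_ne1[OF q, of "2*n+3"] by auto
  moreover have "1 - y*q^(2*n+3) \<noteq> 0" using zq_ne1[OF q y, of "2*n+3"] by auto
  ultimately show ?thesis unfolding G1_def e1 e2 qQ_Suc using pq_nz[OF q, of "n+1"] yq_nz[OF y, of "n+1"]
    by (simp add: field_simps)
qed

lemma G1_summable: "norm y \<le> 1 \<Longrightarrow> summable (\<lambda>n. norm (G1 q z y n))"
proof -
  assume y: "norm y \<le> 1"
  show ?thesis
  proof (rule ratio_summable[of "G1 q z y" "\<lambda>n. z * q^(4*n+4) / ((1 - q^(2*n+3)) * (1 - y*q^(2*n+3)))", OF G1_Suc[OF y]])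
    have q4: "norm (q^4) < 1" using q by (simp add: norm_power power_less_one_iff)
    have "(\<lambda>n. z * (q^4 * (q^4)^n) / ((1 - q^3 * (q^2)^n) * (1 - y * (q^3 * (q^2)^n))))
       \<longlonglongrightarrow> z * (q^4 * 0) / ((1 - q^3 * 0) * (1 - y * (q^3 * 0)))"
      using q2(2)[OF q] q4 by (intro tendsto_intros) auto
    moreover have "\<And>n. q^(4*n+4) = q^4 * (q^4)^n" "\<And>n. q^(2*n+3) = q^3*(q^2)^n"
      by (simp_all add: power_add power_mult[symmetric] mult.commute)
    ultimately show "(\<lambda>n. z * q^(4*n+4) / ((1 - q^(2*n+3)) * (1 - y*q^(2*n+3)))) \<longlonglongrightarrow> 0" by simp
  qed
qed

lemma G1_scale: "norm z \<le> 1 \<Longrightarrow> G1 q (z*q^2) (z*q^2) n * (1 - z*q^(2*n+3)) = (q^2)^n * (1 - z*q) * G1 q z z n"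
proof -
  assume z: "norm z \<le> 1"
  have zq: "norm (z*q^2) \<le> 1" by (rule zqk_le(1)[OF q z])
  have e: "qpoch (z*q^2*q) (q^2) (n+1) * (1 - z*q) = qpoch (z*q) (q^2) (n+1) * (1 - z*q^(2*n+3))"
  proof -
    have eqz: "z*q*q^2 = z*q^2*q" by (simp add: algebra_simps)
    have A: "qpoch (z*q) (q^2) (Suc n + 1) = (1 - z*q) * qpoch (z*q^2*q) (q^2) (n+1)"
      using qpoch_Suc'[of "z*q" "q^2" "n+1", unfolded eqz] by simp
    show ?thesis using A qQ_Suc[of z n] by (metis mult.commute)
  qed
  have "1 - z*q \<noteq> 0" using zq_ne1[OF q z, of 1] by auto
  moreover have "1 - z*q^(2*n+3) \<noteq> 0" using zq_ne1[OF q z, of "2*n+3"] by auto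
  moreover note pq_nz[OF q, of "n+1"] yq_nz[OF z, of "n+1"] yq_nz[OF zq, of "n+1"]
  ultimately have nz: "1 - z*q \<noteq> 0" "1 - z*q^(2*n+3) \<noteq> 0" "qpoch q (q^2) (n+1) \<noteq> 0"
     "qpoch (z*q) (q^2) (n+1) \<noteq> 0" "qpoch (z*q^2*q) (q^2) (n+1) \<noteq> 0" by auto
  define K where "K = q ^ (2 * n ^ 2 + 2 * n + 1)"
  define D where "D = qpoch q (q^2) (n+1)"
  define Y where "Y = qpoch (z*q) (q^2) (n+1)"
  define Y' where "Y' = qpoch (z*q^2*q) (q^2) (n+1)"
  have f: "(1 - z*q^(2*n+3)) / Y' = (1 - z*q) / Y"
    using e nz unfolding Y_def Y'_def by (simp add: field_simps)
  have "G1 q (z*q^2) (z*q^2) n * (1 - z*q^(2*n+3)) = ((z*q^2)^n * K / D) * ((1 - z*q^(2*n+3)) / Y')"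
    unfolding G1_def K_def D_def Y'_def by simp
  also have "\<dots> = ((z*q^2)^n * K / D) * ((1 - z*q) / Y)" by (simp only: f)
  also have "\<dots> = (q^2)^n * (1 - z*q) * G1 q z z n"
    unfolding G1_def K_def D_def Y_def by (simp add: power_mult_distrib)
  finally show ?thesis .
qed

end


lemma alg1:
  fixes ww zz gg qn cc dd uu qq ee :: complex
  assumes "1 - ww \<noteq> 0" "1 - zz*ww \<noteq> 0" "gg * (1 - zz*ww) = qn * cc * dd" "qq*qn = uu"
    "ee = zz*(uu*ww)/((1-ww)*(1-zz*ww)) * dd"
  shows "cc*dd - qq*gg = cc*(1-uu)*dd - cc*(1-ww)*ee"
proof -
  have gg: "gg = qn * cc * dd / (1 - zz*ww)" using assms(2,3) by (simp add: field_simps)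
  have nz: "(1 - ww) * (1 - zz*ww) \<noteq> 0" using assms(1,2) by simp
  show ?thesis unfolding gg assms(5) assms(4)[symmetric] using assms(1,2) nz
    by (simp add: field_simps)
qed

lemma inv_le2: "1/2 \<le> (x::real) \<Longrightarrow> 1/x \<le> 2"
proof -
  assume h: "1/2 \<le> x"
  hence "1 \<le> 2*x" by simp
  moreover have "0 < x" using h by (simp add: order_less_le_trans[of 0 "1/2" x])
  ultimately show ?thesis by (simp add: divide_le_eq)
qed

context fixes q :: complex assumes q: "norm q < 1"
begin

lemma R1_fe:
  assumes z: "norm z \<le> 1"
  shows "(1 - z*q) * suminf (G1 q z z) = q + q * suminf (G1 q (z*q^2) (z*q^2))"
proof -
  define w where "w = z*q^2"
  have w: "norm w \<le> 1" unfolding w_def by (rule zqk_le(1)[OF q z])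
  have s1: "summable (G1 q z z)" "summable (G1 q w w)"
    using summable_norm_cancel[OF G1_summable[OF q z]] summable_norm_cancel[OF G1_summable[OF q w]] by auto
  define T where "T n = (1 - z*q) * (1 - q^(2*n+1)) * G1 q z z n" for n
  have key: "(1 - z*q) * G1 q z z n - q * G1 q w w n = T n - T (Suc n)" for n
  proof -
    have e: "q^(2*Suc n+1) = q^(2*n+3)" by (rule arg_cong[where f="power q"]) simp
    have "1 - q^(2*n+3) \<noteq> 0" using q_ne1[OF q, of "2*n+3"] by auto
    moreover have "1 - z*q^(2*n+3) \<noteq> 0" using zq_ne1[OF q z, of "2*n+3"] by auto
    moreover have "G1 q w w n * (1 - z*q^(2*n+3)) = (q^2)^n * (1 - z*q) * G1 q z z n"
      unfolding w_def by (rule G1_scale[OF q z])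
    moreover have "q * (q^2)^n = q^(2*n+1)" by (rule pq1)
    moreover have "G1 q z z (Suc n) = z*(q^(2*n+1)*q^(2*n+3))/((1-q^(2*n+3))*(1-z*q^(2*n+3))) * G1 q z z n"
    proof -
      have "q^(2*n+1)*q^(2*n+3) = q^(4*n+4)" by (rule pw) simp
      thus ?thesis using G1_Suc[OF q z, of z n] by simp
    qed
    ultimately have "(1 - z*q) * G1 q z z n - q * G1 q w w n =
       (1 - z*q) * (1 - q^(2*n+1)) * G1 q z z n - (1 - z*q) * (1 - q^(2*n+3)) * G1 q z z (Suc n)"
      by (rule alg1)
    thus ?thesis unfolding T_def e .
  qed
  have "T \<longlonglongrightarrow> (1 - z*q) * (1 - q * 0) * 0"
  proof -
    have "(\<lambda>n. (1 - z*q) * (1 - q * (q^2)^n) * G1 q z z n) \<longlonglongrightarrow> (1 - z*q) * (1 - q * 0) * 0"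
      by (intro tendsto_intros q2(2)[OF q] summable_LIMSEQ_zero s1)
    thus ?thesis unfolding T_def pq1 .
  qed
  hence "T \<longlonglongrightarrow> 0" by simp
  hence "(\<lambda>n. T n - T (Suc n)) sums (T 0 - 0)" by (rule telescope_sums')
  moreover have "T 0 = q"
  proof -
    have "1 - q \<noteq> 0" "1 - z*q \<noteq> 0" using q_ne1[OF q, of 1] zq_ne1[OF q z, of 1] by auto
    moreover have "G1 q z z 0 = q / ((1 - q) * (1 - z*q))" by (simp add: G1_def qpoch_def)
    ultimately show ?thesis unfolding T_def by simp
  qed
  ultimately have A: "(\<lambda>n. (1 - z*q) * G1 q z z n - q * G1 q w w n) sums q" unfolding key by simp
  have "(\<lambda>n. (1 - z*q) * G1 q z z n - q * G1 q w w n) sums ((1 - z*q) * suminf (G1 q z z) - q * suminf (G1 q w w))"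
    by (intro sums_diff sums_mult summable_sums s1)
  from sums_unique2[OF this A] show ?thesis unfolding w_def by (simp add: algebra_simps)
qed

lemma R1_bound:
  assumes w: "norm w \<le> (1 - norm q)/4"
  shows "norm (suminf (G1 q w w)) \<le> 2 * (\<Sum>n. norm (G1 q 1 0 n))"
proof -
  have "norm w * 4 \<le> 1 - norm q" using w by (simp add: field_simps)
  hence w1: "norm w \<le> 1" using norm_ge_zero[of q] by linarith
  have b: "norm (G1 q w w n) \<le> 2 * norm (G1 q 1 0 n)" for n
  proof -
    have "norm (w*q) \<le> norm w" using q by (simp add: norm_mult mult_left_le)
    also have "\<dots> \<le> (1 - norm (q^2))/4" using w q2(1)[OF q] by simp
    finally have "1/2 \<le> norm (qpoch (w*q) (q^2) (n+1))" by (rule qpoch_lower(1)[OF q2(2)[OF q]])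
    hence i: "1 / norm (qpoch (w*q) (q^2) (n+1)) \<le> 2" by (rule inv_le2)
    have p: "norm w ^ n \<le> 1" using w1 by (simp add: power_le_one)
    define A where "A = norm (q ^ (2 * n ^ 2 + 2 * n + 1)) / norm (qpoch q (q ^ 2) (n + 1))"
    have "norm (G1 q w w n) = norm w ^ n * A * (1 / norm (qpoch (w*q) (q^2) (n+1)))"
      unfolding G1_def A_def by (simp add: norm_mult norm_divide norm_power)
    also have "\<dots> \<le> 1 * A * 2" using p i unfolding A_def by (intro mult_mono) auto
    also have "A = norm (G1 q 1 0 n)" unfolding G1_def A_def by (simp add: qpoch_def norm_divide)
    finally show ?thesis by simp
  qed
  have "norm (suminf (G1 q w w)) \<le> (\<Sum>n. 2 * norm (G1 q 1 0 n))"
    by (rule norm_suminf_le[OF b]) (intro summable_mult G1_summable[OF q], simp)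
  also have "\<dots> = 2 * (\<Sum>n. norm (G1 q 1 0 n))"
    by (rule suminf_mult) (intro G1_summable[OF q], simp)
  finally show ?thesis .
qed

end


definition E1 :: "complex \<Rightarrow> complex \<Rightarrow> nat \<Rightarrow> complex" where
  "E1 q z n = q ^ (n + 1) / (qpoch (z * q ^ (n + 1)) q (n + 2) * qpoch_inf (z * q ^ (2 * (n + 1) + 2)) (q ^ 2))"

definition P1 :: "complex \<Rightarrow> complex \<Rightarrow> nat \<Rightarrow> complex" where
  "P1 q z m = qpoch (z * q ^ (m + 2)) q m * qpoch_inf (z * q ^ (2 * m + 2)) (q ^ 2)"

lemma alg2:
  fixes A B x y u :: complex
  assumes "A \<noteq> 0" "B \<noteq> 0" "1 - x \<noteq> 0" "B * (1 - x) = A * (1 - y)" "x * (1 - u) = x - y"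
  shows "x * (1 - u) / (1 - x) * (1 / B) = 1 / A - 1 / B"
proof -
  have cr: "(B - A) * (1 - x) = (x - y) * A" using assms(4) by (simp add: algebra_simps)
  have "1 / A - 1 / B = (B - A) / (A * B)" using assms(1,2) by (simp add: field_simps)
  also have "B - A = (x - y) * A / (1 - x)" using cr assms(3) by (simp add: field_simps)
  also have "(x - y) * A / (1 - x) / (A * B) = (x - y) / (1 - x) * (1 / B)" using assms(1,2,3) by simp
  finally show ?thesis unfolding assms(5) by simp
qed

lemma alg3:
  fixes Es Ew B a c q :: complex
  assumes "1 - c*a \<noteq> 0" "B \<noteq> 0" "Es = q*Ew/(1 - c*a)" "Ew = a/B"
  shows "(1-c)*Es = q*Ew - q*((c*a)*(1-a)/(1-c*a)*(1/B))"
  unfolding assms(3,4) using assms(1,2) by (simp add: field_simps)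

lemma p4: "(x::complex)^4 = x^2 * x^2"
proof -
  have "x^(2+2) = x^2*x^2" by (rule power_add)
  thus ?thesis by simp
qed

context fixes q :: complex assumes q: "norm q < 1"
begin

lemma P1_nz: "norm z \<le> 1 \<Longrightarrow> P1 q z m \<noteq> 0"
proof -
  assume z: "norm z \<le> 1"
  have a: "qpoch (z * q^(m+2)) q m \<noteq> 0" by (rule qpoch_nz, rule zqm_ne1(1)[OF q z]) simp
  have b: "qpoch_inf (z*q^(2*m+2)) (q^2) \<noteq> 0"
    by (rule qpoch_inf_nz[OF q2(2)[OF q]], rule zqm_ne1(2)[OF q z]) simp
  show ?thesis unfolding P1_def using a b by simp
qed

lemma P1_rel: "P1 q z (m+1) * (1 - z*q^(m+2)) = P1 q z m * (1 - z*q^(2*m+3))"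
proof -
  define R where "R = qpoch (z * q ^ (m + 2)) q"
  have f1: "(z * q ^ (m + 2)) * q^m = z*q^(2*m+2)"
    using ma[of "m+2" m "2*m+2" z q] by simp
  have f2: "(z * q ^ (m + 2)) * q^(m+1) = z*q^(2*m+3)"
    using ma[of "m+2" "m+1" "2*m+3" z q] by simp
  have f2': "(z * q ^ (m + 2)) * q^(Suc m) = z*q^(2*m+3)" using f2 by simp
  have i: "R (m+2) = R m * (1 - z*q^(2*m+2)) * (1 - z*q^(2*m+3))"
  proof -
    have "R (m+2) = R (Suc (Suc m))" by (simp add: numeral_2_eq_2)
    also have "\<dots> = R m * (1 - (z * q ^ (m + 2)) * q^m) * (1 - (z * q ^ (m + 2)) * q^(Suc m))"
      by (simp only: R_def qpoch_Suc)
    finally show ?thesis unfolding f1 f2' .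
  qed
  have f3: "(z * q ^ (m + 2)) * q = z * q^(m+1+2)"
    using ma[of "m+2" 1 "m+1+2" z q] by simp
  have ii: "R (m+2) = (1 - z*q^(m+2)) * qpoch (z * q ^ (m + 1 + 2)) q (m+1)"
    using qpoch_Suc'[of "z * q ^ (m + 2)" q "m+1"] unfolding R_def f3 by (simp add: numeral_2_eq_2)
  have f4: "(z * q ^ (2*m + 2)) * q^2 = z * q^(2*(m+1)+2)"
    using ma[of "2*m+2" 2 "2*(m+1)+2" z q] by simp
  have iii: "qpoch_inf (z * q ^ (2*m + 2)) (q^2) = (1 - z*q^(2*m+2)) * qpoch_inf (z * q^(2*(m+1)+2)) (q^2)"
    using qpoch_inf_shift[OF q2(2)[OF q], of "z * q ^ (2*m + 2)"] unfolding f4 by simp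
  have "P1 q z m * (1 - z*q^(2*m+3)) = R m * (1 - z*q^(2*m+2)) * (1 - z*q^(2*m+3)) * qpoch_inf (z * q^(2*(m+1)+2)) (q^2)"
    unfolding P1_def R_def[symmetric] iii by (simp add: algebra_simps)
  also have "\<dots> = (1 - z*q^(m+2)) * P1 q z (m+1)"
    unfolding i[symmetric] ii P1_def by (simp add: pn algebra_simps)
  finally show ?thesis by (simp add: algebra_simps)
qed

lemma E1_Suc: "E1 q z (n+1) = q * E1 q (z*q^2) n / (1 - z*q^(n+2))"
proof -
  have f: "z * q^(n+1+1) * q = (z*q^2) * q^(n+1)" by (simp add: pn algebra_simps)
  have e1: "qpoch (z * q ^ (n + 1 + 1)) q (n + 1 + 2) = (1 - z * q ^ (n + 1 + 1)) * qpoch ((z*q^2) * q^(n+1)) q (n+2)"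
    using qpoch_Suc'[of "z * q ^ (n + 1 + 1)" q "n+2", unfolded f] by (simp add: numeral_2_eq_2)
  have e2: "z * q ^ (2 * (n + 1 + 1) + 2) = (z*q^2) * q^(2*(n+1)+2)" by (simp add: pn algebra_simps)
  have e3: "q^(n+1+1) = q * q^(n+1)" by simp
  have e4: "z * q ^ (n + 1 + 1) = z*q^(n+2)" by (simp add: pn algebra_simps)
  show ?thesis unfolding E1_def unfolding e1 e2 unfolding e3 e4 by (simp add: field_simps)
qed

lemma E1_P: "E1 q (z*q^2) n = q^(n+1) / P1 q z (n+1)"
proof -
  define a where "a = z * q^(n+1+2)"
  have f0: "(z*q^2) * q^(n+1) = a" unfolding a_def by (simp add: pn algebra_simps)
  have f1: "a * q^(n+1) = z * q^(2*(n+1)+2)" unfolding a_def by (simp add: pn algebra_simps)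
  have f2: "(z * q^(2*(n+1)+2)) * q^2 = (z*q^2) * q ^ (2 * (n + 1) + 2)" by (simp add: pn algebra_simps)
  have i: "qpoch a q (n+2) = qpoch a q (n+1) * (1 - z * q^(2*(n+1)+2))"
    using qpoch_Suc[of a q "n+1"] unfolding f1 by (simp add: numeral_2_eq_2)
  have ii: "qpoch_inf (z * q^(2*(n+1)+2)) (q^2) = (1 - z * q^(2*(n+1)+2)) * qpoch_inf ((z*q^2) * q ^ (2 * (n + 1) + 2)) (q^2)"
    using qpoch_inf_shift[OF q2(2)[OF q], of "z * q^(2*(n+1)+2)"] unfolding f2 .
  show ?thesis unfolding E1_def P1_def f0 i ii a_def[symmetric] by (simp add: algebra_simps)
qed

lemma E1_0: "norm z \<le> 1 \<Longrightarrow> (1 - z*q) * E1 q z 0 = q / P1 q z 0"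
proof -
  assume z: "norm z \<le> 1"
  have nz: "1 - z*q \<noteq> 0" using zq_ne1[OF q z, of 1] by auto
  have n4: "(2*(0+1)+2::nat) = 2+2" by simp
  have e4: "z*q^(2*(0+1)+2) = z*q^2*q^2" by (simp only: n4 power_add mult.assoc)
  have e5: "q^(0+1) = q" "z*q^(0+1) = z*q" "(0::nat) + 2 = 2" by simp_all
  have E0: "E1 q z 0 = q / (qpoch (z*q) q 2 * qpoch_inf (z*q^2*q^2) (q^2))"
    unfolding E1_def e4 e5 ..
  have Q2: "qpoch (z*q) q 2 = (1 - z*q) * (1 - z*q^2)"
    unfolding numeral_2_eq_2 qpoch_Suc qpoch_0 by (simp add: algebra_simps)
  have I: "qpoch_inf (z*q^2) (q^2) = (1 - z*q^2) * qpoch_inf (z*q^2*q^2) (q^2)"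
    by (rule qpoch_inf_shift[OF q2(2)[OF q]])
  have P0: "P1 q z 0 = qpoch_inf (z*q^2) (q^2)" by (simp add: P1_def power2_eq_square)
  have "(1 - z*q) * (q / ((1 - z*q) * ((1 - z*q^2) * qpoch_inf (z*q^2*q^2) (q^2)))) =
        q / ((1 - z*q^2) * qpoch_inf (z*q^2*q^2) (q^2))" using nz by simp
  thus ?thesis unfolding E0 Q2 P0 I by (simp add: mult.assoc)
qed

lemma tele1:
  assumes z: "norm z \<le> 1"
  shows "(\<lambda>n. z*q^(n+2)*(1 - q^(n+1)) / (1 - z*q^(n+2)) * (1 / P1 q z (n+1))) sums (1 / P1 q z 0 - 1)"
proof -
  define c where "c n = 1 / P1 q z n" for n
  have t: "z*q^(n+2)*(1 - q^(n+1)) / (1 - z*q^(n+2)) * (1 / P1 q z (n+1)) = c n - c (Suc n)" for n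
  proof -
    have nz: "P1 q z n \<noteq> 0" "P1 q z (n+1) \<noteq> 0" "1 - z*q^(n+2) \<noteq> 0"
      using P1_nz[OF z] zq_ne1[OF q z, of "n+2"] by auto
    have e: "z*q^(n+2) * q^(n+1) = z*q^(2*n+3)" using ma[of "n+2" "n+1" "2*n+3" z q] by simp
    have "z*q^(n+2)*(1 - q^(n+1)) = z*q^(n+2) - z*q^(2*n+3)" by (simp only: right_diff_distrib mult_1_right e)
    from alg2[OF nz P1_rel this] show ?thesis unfolding c_def by simp
  qed
  have "c \<longlonglongrightarrow> 1 / (1 * 1)"
  proof -
    have l1: "(\<lambda>m. z * q ^ (m + 2)) \<longlonglongrightarrow> 0"
    proof -
      have "(\<lambda>m. z * q^2 * q ^ m) \<longlonglongrightarrow> z * q^2 * 0" by (intro tendsto_intros q)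
      moreover have "z * q^2 * q ^ m = z * q ^ (m + 2)" for m using ma[of 2 m "m+2" z q] by simp
      ultimately show ?thesis by simp
    qed
    have l2: "(\<lambda>m. z * q ^ (2*m + 2)) \<longlonglongrightarrow> 0"
    proof -
      have "(\<lambda>m. z * (q^2 * (q^2) ^ m)) \<longlonglongrightarrow> z * (q^2 * 0)" by (intro tendsto_intros q2(2)[OF q])
      moreover have "q^2 * (q^2)^m = q^(2*m+2)" for m unfolding pq3 by (rule pw) simp
      ultimately show ?thesis by simp
    qed
    show ?thesis unfolding c_def P1_def
      by (intro tendsto_intros qpoch_to1[OF q l1] qpoch_to1[OF q2(2)[OF q] l2]) simp
  qed
  hence "c \<longlonglongrightarrow> 1" by simp
  hence "(\<lambda>n. c n - c (Suc n)) sums (c 0 - 1)" by (rule telescope_sums')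
  thus ?thesis unfolding t c_def .
qed

lemma E1_bound:
  assumes "norm (z*q^(n+1)) \<le> (1 - norm q)/4"
  shows "norm (E1 q z n) \<le> 4 * norm q ^ (n+1)"
proof -
  have a2: "norm (z * q ^ (2 * (n + 1) + 2)) \<le> (1 - norm (q^2))/4"
  proof -
    have eq: "z * q ^ (2 * (n + 1) + 2) = (z*q^(n+1)) * q^(n+3)" by (simp add: pn algebra_simps)
    have "norm (z * q ^ (2 * (n + 1) + 2)) = norm (z*q^(n+1)) * norm q^(n+3)" by (simp only: eq norm_mult norm_power)
    also have "\<dots> \<le> norm (z*q^(n+1)) * 1" using q by (intro mult_left_mono power_le_one) auto
    also have "\<dots> \<le> (1 - norm (q^2))/4" using assms q2(1)[OF q] by simp
    finally show ?thesis .
  qed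
  have l1: "1/2 \<le> norm (qpoch (z * q ^ (n + 1)) q (n + 2))" by (rule qpoch_lower(1)[OF q assms])
  have l2: "1/2 \<le> norm (qpoch_inf (z * q ^ (2 * (n + 1) + 2)) (q ^ 2))" by (rule qpoch_lower(2)[OF q2(2)[OF q] a2])
  have "1/2 * (1/2) \<le> norm (qpoch (z * q ^ (n + 1)) q (n + 2)) * norm (qpoch_inf (z * q ^ (2 * (n + 1) + 2)) (q ^ 2))"
    using l1 l2 by (intro mult_mono) auto
  hence i: "1 / (norm (qpoch (z * q ^ (n + 1)) q (n + 2)) * norm (qpoch_inf (z * q ^ (2 * (n + 1) + 2)) (q ^ 2))) \<le> 4"
    by (simp add: divide_le_eq)
  have "norm (E1 q z n) = norm q ^ (n+1) * (1 / (norm (qpoch (z * q ^ (n + 1)) q (n + 2)) * norm (qpoch_inf (z * q ^ (2 * (n + 1) + 2)) (q ^ 2))))"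
    unfolding E1_def by (simp add: norm_divide norm_mult norm_power)
  also have "\<dots> \<le> norm q ^ (n+1) * 4" using i by (intro mult_left_mono) auto
  finally show ?thesis by simp
qed

lemma E1_summable:
  assumes z: "norm z \<le> 1"
  shows "summable (\<lambda>n. norm (E1 q z n))"
proof -
  have "(\<lambda>n. z * q * q ^ n) \<longlonglongrightarrow> z * q * 0" by (intro tendsto_intros q)
  hence "(\<lambda>n. norm (z * q^(n+1))) \<longlonglongrightarrow> 0" by (simp add: tendsto_norm_zero mult.assoc mult.commute mult.left_commute)
  moreover have "(1 - norm q)/4 > 0" using q by simp
  ultimately have "eventually (\<lambda>n. norm (z * q^(n+1)) < (1 - norm q)/4) sequentially"
    by (rule order_tendstoD)
  hence "eventually (\<lambda>n. norm (norm (E1 q z n)) \<le> 4 * norm q ^ (n+1)) sequentially"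
    by eventually_elim (use E1_bound in auto)
  moreover have "summable (\<lambda>n. 4 * norm q ^ (n+1))"
    using q by (intro summable_mult summable_ignore_initial_segment[of "\<lambda>n. norm q ^ n" 1, simplified] summable_geometric) auto
  ultimately show ?thesis by (rule summable_comparison_test_ev)
qed

lemma L1_bound:
  assumes w: "norm w \<le> (1 - norm q)/4"
  shows "norm (suminf (E1 q w)) \<le> (\<Sum>n. 4 * norm q ^ (n+1))"
proof (rule norm_suminf_le)
  fix n
  have "norm q^(n+1) \<le> 1" using q by (intro power_le_one) auto
  hence "norm w * norm q^(n+1) \<le> norm w * 1" by (intro mult_left_mono) auto
  hence "norm (w*q^(n+1)) \<le> norm w" by (simp add: norm_mult norm_power)
  thus "norm (E1 q w n) \<le> 4 * norm q ^ (n+1)" using w by (intro E1_bound) simp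
next
  show "summable (\<lambda>n. 4 * norm q ^ (n+1))"
    using q by (intro summable_mult summable_ignore_initial_segment[of "\<lambda>n. norm q ^ n" 1, simplified] summable_geometric) auto
qed

lemma L1_fe:
  assumes z: "norm z \<le> 1"
  shows "(1 - z*q) * suminf (E1 q z) = q + q * suminf (E1 q (z*q^2))"
proof -
  define w where "w = z*q^2"
  have w: "norm w \<le> 1" unfolding w_def by (rule zqk_le(1)[OF q z])
  have s: "summable (E1 q z)" "summable (E1 q w)"
    using summable_norm_cancel[OF E1_summable[OF z]] summable_norm_cancel[OF E1_summable[OF w]] by auto
  define t where "t n = z*q^(n+2)*(1 - q^(n+1)) / (1 - z*q^(n+2)) * (1 / P1 q z (n+1))" for n
  have k: "(1 - z*q) * E1 q z (Suc n) = q * E1 q w n - q * t n" for n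
  proof -
    have x: "z*q^(n+2) = (z*q)*q^(n+1)" using ma[of 1 "n+1" "n+2" z q] by simp
    have "1 - z*q^(n+2) \<noteq> 0" using zq_ne1[OF q z, of "n+2"] by auto
    hence nz: "1 - (z*q)*q^(n+1) \<noteq> 0" "P1 q z (n+1) \<noteq> 0" unfolding x using P1_nz[OF z] by auto
    have "E1 q z (Suc n) = q * E1 q w n / (1 - (z*q)*q^(n+1))" using E1_Suc[of z n] x unfolding w_def by simp
    from alg3[OF nz this E1_P[of z n, folded w_def]] show ?thesis unfolding t_def x .
  qed
  have "(\<lambda>n. q * E1 q w n - q * t n) sums (q * suminf (E1 q w) - q * (1 / P1 q z 0 - 1))"
    unfolding t_def by (intro sums_diff sums_mult summable_sums s tele1 z)
  hence A: "(\<lambda>n. (1 - z*q) * E1 q z (Suc n)) sums (q * suminf (E1 q w) - q * (1 / P1 q z 0 - 1))"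
    unfolding k .
  have "(\<lambda>n. (1 - z*q) * E1 q z n) sums ((1 - z*q) * suminf (E1 q z))" by (intro sums_mult summable_sums s)
  hence "(\<lambda>n. (1 - z*q) * E1 q z (Suc n)) sums ((1 - z*q) * suminf (E1 q z) - (1 - z*q) * E1 q z 0)"
    using sums_Suc_iff[of "\<lambda>n. (1 - z*q) * E1 q z n" "(1 - z * q) * suminf (E1 q z) - (1 - z * q) * E1 q z 0"]
    by simp
  from sums_unique2[OF this A] E1_0[OF z] show ?thesis unfolding w_def by (simp add: algebra_simps)
qed

end


lemma id1:
  fixes q z :: complex assumes q: "norm q < 1" and z: "norm z < 1"
  shows "summable (G1 q z z) \<and> E1 q z sums suminf (G1 q z z)"
proof -
  define zN where "zN N = z*(q^2)^N" for N
  have zS: "zN (Suc N) = zN N * q^2" for N unfolding zN_def by (simp add: mult.assoc mult.commute)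
  have zle: "norm (zN N) \<le> 1" for N using zN_facts(1)[OF q z, of N] z unfolding zN_def by simp
  define G where "G N = suminf (E1 q (zN N)) - suminf (G1 q (zN N) (zN N))" for N
  define \<gamma> where "\<gamma> N = q / (1 - zN N * q)" for N
  have e: "G N = \<gamma> N * G (Suc N)" for N
  proof -
    have nz: "1 - zN N * q \<noteq> 0" using zq_ne1[OF q zle[of N], of 1] by auto
    have "(1 - zN N * q) * G N = (1 - zN N * q) * suminf (E1 q (zN N)) - (1 - zN N * q) * suminf (G1 q (zN N) (zN N))"
      unfolding G_def by (simp add: right_diff_distrib)
    also have "\<dots> = (q + q * suminf (E1 q (zN N * q^2))) - (q + q * suminf (G1 q (zN N * q^2) (zN N * q^2)))"
      unfolding L1_fe[OF q zle[of N]] R1_fe[OF q zle[of N]] ..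
    also have "\<dots> = q * G (Suc N)" unfolding G_def zS by (simp add: right_diff_distrib)
    finally have "(1 - zN N * q) * G N = q * G (Suc N)" .
    thus ?thesis unfolding \<gamma>_def using nz by (simp add: field_simps)
  qed
  define \<epsilon> where "\<epsilon> = (1 - norm q)/4"
  have ep: "\<epsilon> > 0" using q unfolding \<epsilon>_def by simp
  have ep4: "\<epsilon> * 4 = 1 - norm q" unfolding \<epsilon>_def by simp
  obtain N0 where N0: "\<And>N. N \<ge> N0 \<Longrightarrow> norm (zN N) \<le> \<epsilon>"
    using zN_facts(2)[OF q z ep] unfolding zN_def by blast
  have pos: "0 < 1 - \<epsilon>" using ep4 q norm_ge_zero[of q] by linarith
  have "norm q < 1 - \<epsilon>" using ep4 ep by linarith
  hence c: "norm q / (1 - \<epsilon>) < 1" using pos by (simp add: pos_divide_less_eq)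
  have g: "norm (\<gamma> N) \<le> norm q / (1 - \<epsilon>)" if "N \<ge> N0" for N
  proof -
    have "norm (zN N * q) \<le> \<epsilon> * 1"
      unfolding norm_mult using N0[OF that] q ep by (intro mult_mono) auto
    hence "1 - \<epsilon> \<le> norm (1 - zN N * q)"
      using norm_triangle_ineq2[of 1 "zN N * q"] by simp
    moreover have p: "0 < 1 - \<epsilon>" using ep4 q norm_ge_zero[of q] by linarith
    ultimately have "0 < norm (1 - zN N * q)" by linarith
    with \<open>1 - \<epsilon> \<le> norm (1 - zN N * q)\<close> p show ?thesis unfolding \<gamma>_def norm_divide
      by (intro divide_left_mono) auto
  qed
  have b: "norm (G N) \<le> (\<Sum>n. 4 * norm q ^ (n+1)) + 2 * (\<Sum>n. norm (G1 q 1 0 n))" if "N \<ge> N0" for N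
  proof -
    have w: "norm (zN N) \<le> (1 - norm q)/4" using N0[OF that] unfolding \<epsilon>_def .
    show ?thesis unfolding G_def
      by (rule order_trans[OF norm_triangle_ineq4 add_mono[OF L1_bound[OF q w] R1_bound[OF q w]]])
  qed
  have "G 0 = 0"
    apply (rule uniq[of G \<gamma> N0 "norm q / (1 - \<epsilon>)"])
       apply (rule e) apply (erule g) apply (rule c) apply (erule b) done
  hence eq: "suminf (E1 q z) = suminf (G1 q z z)" unfolding G_def zN_def by simp
  have s1: "summable (\<lambda>n. norm (E1 q z n))" by (rule E1_summable[OF q]) (use z in simp)
  have sA: "summable (E1 q z)" by (rule summable_norm_cancel[OF s1])
  have sC: "summable (G1 q z z)" by (rule summable_norm_cancel[OF G1_summable[OF q]]) (use z in simp)
  have "E1 q z sums suminf (E1 q z)" by (rule summable_sums[OF sA])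
  with sC eq show ?thesis by simp
qed

theorem theorem1p1:
  fixes q z :: complex
  assumes "norm q < 1" and "norm z < 1"
  shows "summable (\<lambda>n. z ^ n * q ^ (2 * n ^ 2 + 2 * n + 1)
              / (qpoch q (q ^ 2) (n + 1) * qpoch (z * q) (q ^ 2) (n + 1)))
       \<and> (\<lambda>n. q ^ (n + 1)
              / (qpoch (z * q ^ (n + 1)) q (n + 2) * qpoch_inf (z * q ^ (2 * (n + 1) + 2)) (q ^ 2)))
           sums (\<Sum>n. z ^ n * q ^ (2 * n ^ 2 + 2 * n + 1)
              / (qpoch q (q ^ 2) (n + 1) * qpoch (z * q) (q ^ 2) (n + 1)))
       \<and> summable (\<lambda>n. z ^ n * q ^ (n ^ 2 + n) / qpoch q (q ^ 2) (n + 1))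
       \<and> (\<lambda>n. q ^ n * qpoch (- z * q ^ (n + 1)) q n * qpoch_inf (- z * q ^ (2 * n + 2)) (q ^ 2))
           sums (\<Sum>n. z ^ n * q ^ (n ^ 2 + n) / qpoch q (q ^ 2) (n + 1))"
proof -
  have f1: "(\<lambda>n. z ^ n * q ^ (2 * n ^ 2 + 2 * n + 1)
              / (qpoch q (q ^ 2) (n + 1) * qpoch (z * q) (q ^ 2) (n + 1))) = G1 q z z"
    by (simp add: fun_eq_iff G1_def)
  have f2: "(\<lambda>n. q ^ (n + 1)
              / (qpoch (z * q ^ (n + 1)) q (n + 2) * qpoch_inf (z * q ^ (2 * (n + 1) + 2)) (q ^ 2))) = E1 q z"
    by (simp add: fun_eq_iff E1_def)
  have f3: "(\<lambda>n. z ^ n * q ^ (n ^ 2 + n) / qpoch q (q ^ 2) (n + 1)) = C2 q z"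
    by (simp add: fun_eq_iff C2_def)
  have f4: "(\<lambda>n. q ^ n * qpoch (- z * q ^ (n + 1)) q n * qpoch_inf (- z * q ^ (2 * n + 2)) (q ^ 2)) = A2 q z"
    by (simp add: fun_eq_iff A2_def)
  show ?thesis unfolding f1 f2 f3 f4 using id1[OF assms] id2[OF assms] by blast
qed


end
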